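(* Let $K$ be a field with pairwise commuting derivations $\frac{d}{dx_1},\dots,\frac{d}{dx_k}$ and field of constants $C$. Give $K(\partial_1,\dots,\partial_k)$ the language $\{0,1,+,\cdot,\partial_1,\dots,\partial_k\}$ and $C(t_1,\dots,t_k)$ the language $\{0,1,+,\cdot,t_1,\dots,t_k\}$. Then the $C$-algebra homomorphism $\phi:C(t_1,\dots,t_k)\to K(\partial_1,\dots,\partial_k)$ with $\phi(t_i)=\partial_i$ is an effective Diophantine map.
   Context: The field of constants is $C=\{f\in K\mid \frac{d}{dx_1}f=\dots=\frac{d}{dx_k}f=0\}$. $K[\partial_1,\dots,\partial_k]$ is the ring of differential polynomials with usual addition and multiplication determined by $\partial_i\partial_j=\partial_j\partial_i$ and $\partial_ia=a\partial_i+\frac{d}{dx_i}(a)$ for $a\in K$; it satisfies the left Ore condition and $K(\partial_1,\dots,\partial_k)$ denotes its left division ring of fractions. For a set $R$ with language $\mathcal{L}$ (constants, functions, relations incl. $0$ and $=$), $S\subset R^m$ is Diophantine if $S=\{\vec x\mid\exists\vec y\ (f_1\wedge\dots\wedge f_r)\}$ with basic formulas $f_i$ of the form $(t_1,\dots,t_l)\in S'$, $S'$ a relation or equality and $t_j$ terms of $\mathcal{L}$. A map $d:R_1\to R_2$ is Diophantine if coordinatewise images of Diophantine sets are Diophantine; it is effective if a Diophantine definition of $d(S)$ can be algorithmically computed from one of $S$. *)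

theory Defs
  imports Main "HOL-Library.Nat_Bijection"
begin

text \<open>k pairwise commuting derivations der 0, ..., der (k-1) on a field of type 'k.
  (Index i stands for d/dx_(i+1).)\<close>
definition commuting_derivations :: "nat \<Rightarrow> (nat \<Rightarrow> 'k::field \<Rightarrow> 'k) \<Rightarrow> bool" where
  "commuting_derivations k der \<longleftrightarrow>
     (\<forall>i<k. \<forall>a b. der i (a + b) = der i a + der i b) \<and>
     (\<forall>i<k. \<forall>a b. der i (a * b) = der i a * b + a * der i b) \<and>
     (\<forall>i<k. \<forall>l<k. \<forall>a. der i (der l a) = der l (der i a))"

definition constants :: "nat \<Rightarrow> (nat \<Rightarrow> 'k::field \<Rightarrow> 'k) \<Rightarrow> 'k set" where
  "constants k der = {a. \<forall>i<k. der i a = 0}"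

definition multi_indices :: "nat \<Rightarrow> (nat \<Rightarrow> nat) set" where
  "multi_indices k = {\<alpha>. \<forall>i\<ge>k. \<alpha> i = 0}"

definition ncmono :: "nat \<Rightarrow> (nat \<Rightarrow> 'a::ring_1) \<Rightarrow> (nat \<Rightarrow> nat) \<Rightarrow> 'a" where
  "ncmono k d \<alpha> = foldr (\<lambda>i acc. d i ^ \<alpha> i * acc) [0..<k] 1"

definition diffop_set :: "nat \<Rightarrow> ('k \<Rightarrow> 'd::ring_1) \<Rightarrow> (nat \<Rightarrow> 'd) \<Rightarrow> 'd set" where
  "diffop_set k j d = {(\<Sum>\<alpha>\<in>A. j (c \<alpha>) * ncmono k d \<alpha>) | A c. finite A \<and> A \<subseteq> multi_indices k}"

text \<open>(D, j, d) is the left division ring of fractions K(d_1,...,d_k) of the ring of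
  differential polynomials K[d_1,...,d_k]: j embeds K as a subring, the d_i commute pairwise
  and satisfy d_i a = a d_i + der_i(a), the monomials d^alpha are left K-linearly independent
  (so the subring generated is K[d_1,...,d_k]), and every element of D is a left fraction
  p^{-1} q of differential polynomials.  These properties determine D up to isomorphism.\<close>
definition is_diffop_fraction_ring ::
  "nat \<Rightarrow> (nat \<Rightarrow> 'k::field \<Rightarrow> 'k) \<Rightarrow> ('k \<Rightarrow> 'd::division_ring) \<Rightarrow> (nat \<Rightarrow> 'd) \<Rightarrow> bool" where
  "is_diffop_fraction_ring k der j d \<longleftrightarrow>
     (\<forall>a b. j (a + b) = j a + j b) \<and> (\<forall>a b. j (a * b) = j a * j b) \<and> j 1 = 1 \<and>
     (\<forall>i<k. \<forall>l<k. d i * d l = d l * d i) \<and>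
     (\<forall>i<k. \<forall>a. d i * j a = j a * d i + j (der i a)) \<and>
     (\<forall>A c. finite A \<longrightarrow> A \<subseteq> multi_indices k \<longrightarrow>
        (\<Sum>\<alpha>\<in>A. j (c \<alpha>) * ncmono k d \<alpha>) = 0 \<longrightarrow> (\<forall>\<alpha>\<in>A. c \<alpha> = 0)) \<and>
     (\<forall>x. \<exists>p\<in>diffop_set k j d. \<exists>q\<in>diffop_set k j d. p \<noteq> 0 \<and> x = inverse p * q)"

definition cpoly_set :: "nat \<Rightarrow> 'k set \<Rightarrow> ('k \<Rightarrow> 'f::field) \<Rightarrow> (nat \<Rightarrow> 'f) \<Rightarrow> 'f set" where
  "cpoly_set k C e t = {(\<Sum>\<alpha>\<in>A. e (c \<alpha>) * (\<Prod>i<k. t i ^ \<alpha> i)) | A c.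
      finite A \<and> A \<subseteq> multi_indices k \<and> (\<forall>\<alpha>\<in>A. c \<alpha> \<in> C)}"

text \<open>(F, e, t) is the field of rational functions C(t_1,...,t_k): e embeds the field C,
  the t_i are algebraically independent over C, and F is the fraction field of C[t].\<close>
definition is_rational_function_field ::
  "nat \<Rightarrow> 'k::field set \<Rightarrow> ('k \<Rightarrow> 'f::field) \<Rightarrow> (nat \<Rightarrow> 'f) \<Rightarrow> bool" where
  "is_rational_function_field k C e t \<longleftrightarrow>
     (\<forall>a\<in>C. \<forall>b\<in>C. e (a + b) = e a + e b \<and> e (a * b) = e a * e b) \<and> e 1 = 1 \<and>
     (\<forall>A c. finite A \<longrightarrow> A \<subseteq> multi_indices k \<longrightarrow> (\<forall>\<alpha>\<in>A. c \<alpha> \<in> C) \<longrightarrow>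
        (\<Sum>\<alpha>\<in>A. e (c \<alpha>) * (\<Prod>i<k. t i ^ \<alpha> i)) = 0 \<longrightarrow> (\<forall>\<alpha>\<in>A. c \<alpha> = 0)) \<and>
     (\<forall>x. \<exists>p\<in>cpoly_set k C e t. \<exists>q\<in>cpoly_set k C e t. q \<noteq> 0 \<and> x = p / q)"

definition is_C_algebra_hom ::
  "nat \<Rightarrow> 'k set \<Rightarrow> ('k \<Rightarrow> 'f::field) \<Rightarrow> (nat \<Rightarrow> 'f) \<Rightarrow> ('k \<Rightarrow> 'd::division_ring) \<Rightarrow> (nat \<Rightarrow> 'd)
     \<Rightarrow> ('f \<Rightarrow> 'd) \<Rightarrow> bool" where
  "is_C_algebra_hom k C e t j d \<phi> \<longleftrightarrow>
     (\<forall>x y. \<phi> (x + y) = \<phi> x + \<phi> y) \<and> (\<forall>x y. \<phi> (x * y) = \<phi> x * \<phi> y) \<and> \<phi> 1 = 1 \<and>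
     (\<forall>c\<in>C. \<phi> (e c) = j c) \<and> (\<forall>i<k. \<phi> (t i) = d i)"

datatype tm = Var nat | Zer | One | Add tm tm | Mul tm tm | Cst nat

fun eval_tm :: "(nat \<Rightarrow> 'a::semiring_1) \<Rightarrow> 'a list \<Rightarrow> tm \<Rightarrow> 'a" where
  "eval_tm cs vs (Var n) = vs ! n"
| "eval_tm cs vs Zer = 0"
| "eval_tm cs vs One = 1"
| "eval_tm cs vs (Add a b) = eval_tm cs vs a + eval_tm cs vs b"
| "eval_tm cs vs (Mul a b) = eval_tm cs vs a * eval_tm cs vs b"
| "eval_tm cs vs (Cst i) = cs i"

fun wf_tm :: "nat \<Rightarrow> nat \<Rightarrow> tm \<Rightarrow> bool" where
  "wf_tm k nv (Var n) = (n < nv)"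
| "wf_tm k nv Zer = True"
| "wf_tm k nv One = True"
| "wf_tm k nv (Add a b) = (wf_tm k nv a \<and> wf_tm k nv b)"
| "wf_tm k nv (Mul a b) = (wf_tm k nv a \<and> wf_tm k nv b)"
| "wf_tm k nv (Cst i) = (i < k)"

text \<open>A Diophantine definition (m, n, eqs): free variables 0..m-1, existentially quantified
  variables m..m+n-1, and a conjunction of equations s = t.\<close>
type_synonym dioph = "nat \<times> nat \<times> (tm \<times> tm) list"

definition wf_dioph :: "nat \<Rightarrow> dioph \<Rightarrow> bool" where
  "wf_dioph k \<delta> = (case \<delta> of (m, n, eqs) \<Rightarrow>
      (\<forall>(s, t)\<in>set eqs. wf_tm k (m + n) s \<and> wf_tm k (m + n) t))"

definition dioph_arity :: "dioph \<Rightarrow> nat" where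
  "dioph_arity \<delta> = fst \<delta>"

text \<open>The subset of R^m (tuples as lists of length m) defined by a Diophantine definition,
  where the constant symbols are interpreted by cs.\<close>
definition dioph_set :: "(nat \<Rightarrow> 'a::semiring_1) \<Rightarrow> dioph \<Rightarrow> 'a list set" where
  "dioph_set cs \<delta> = (case \<delta> of (m, n, eqs) \<Rightarrow>
      {xs. length xs = m \<and> (\<exists>ys. length ys = n \<and>
          (\<forall>(s, t)\<in>set eqs. eval_tm cs (xs @ ys) s = eval_tm cs (xs @ ys) t))})"

definition is_diophantine :: "nat \<Rightarrow> (nat \<Rightarrow> 'a::semiring_1) \<Rightarrow> nat \<Rightarrow> 'a list set \<Rightarrow> bool" where
  "is_diophantine k cs m S \<longleftrightarrow> (\<exists>\<delta>. wf_dioph k \<delta> \<and> dioph_arity \<delta> = m \<and> dioph_set cs \<delta> = S)"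

definition diophantine_map ::
  "nat \<Rightarrow> (nat \<Rightarrow> 'a::semiring_1) \<Rightarrow> (nat \<Rightarrow> 'b::semiring_1) \<Rightarrow> ('a \<Rightarrow> 'b) \<Rightarrow> bool" where
  "diophantine_map k cs1 cs2 f \<longleftrightarrow>
     (\<forall>m S. is_diophantine k cs1 m S \<longrightarrow> is_diophantine k cs2 m (map f ` S))"

datatype recf = Zf | Sf | Pf nat | Cn recf "recf list" | Pr recf recf | Mn recf

inductive rec_eval :: "recf \<Rightarrow> nat list \<Rightarrow> nat \<Rightarrow> bool" where
  zero: "rec_eval Zf xs 0"
| succ: "rec_eval Sf (x # xs) (Suc x)"
| proj: "i < length xs \<Longrightarrow> rec_eval (Pf i) xs (xs ! i)"
| comp: "list_all2 (\<lambda>g y. rec_eval g xs y) gs ys \<Longrightarrow> rec_eval f ys z \<Longrightarrow> rec_eval (Cn f gs) xs z"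
| prim0: "rec_eval f xs z \<Longrightarrow> rec_eval (Pr f g) (0 # xs) z"
| primS: "rec_eval (Pr f g) (n # xs) y \<Longrightarrow> rec_eval g (n # y # xs) z \<Longrightarrow> rec_eval (Pr f g) (Suc n # xs) z"
| mu: "rec_eval f (n # xs) 0 \<Longrightarrow> (\<forall>i<n. \<exists>y. rec_eval f (i # xs) (Suc y)) \<Longrightarrow> rec_eval (Mn f) xs n"

fun enc_tm :: "tm \<Rightarrow> nat" where
  "enc_tm (Var n) = prod_encode (0, n)"
| "enc_tm Zer = prod_encode (1, 0)"
| "enc_tm One = prod_encode (2, 0)"
| "enc_tm (Add a b) = prod_encode (3, prod_encode (enc_tm a, enc_tm b))"
| "enc_tm (Mul a b) = prod_encode (4, prod_encode (enc_tm a, enc_tm b))"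
| "enc_tm (Cst i) = prod_encode (5, i)"

definition enc_dioph :: "dioph \<Rightarrow> nat" where
  "enc_dioph \<delta> = (case \<delta> of (m, n, eqs) \<Rightarrow>
      prod_encode (m, prod_encode (n, list_encode (map (\<lambda>(s, t). prod_encode (enc_tm s, enc_tm t)) eqs))))"

definition effective_diophantine_map ::
  "nat \<Rightarrow> (nat \<Rightarrow> 'a::semiring_1) \<Rightarrow> (nat \<Rightarrow> 'b::semiring_1) \<Rightarrow> ('a \<Rightarrow> 'b) \<Rightarrow> bool" where
  "effective_diophantine_map k cs1 cs2 f \<longleftrightarrow>
     (\<exists>r. \<forall>\<delta>. wf_dioph k \<delta> \<longrightarrow>
        (\<exists>\<delta>'. rec_eval r [enc_dioph \<delta>] (enc_dioph \<delta>') \<and> wf_dioph k \<delta>' \<and>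
               dioph_arity \<delta>' = dioph_arity \<delta> \<and> dioph_set cs2 \<delta>' = map f ` dioph_set cs1 \<delta>))"

end

theory Submission
  imports Defs
begin


lemma cn1: "rec_eval g xs y \<Longrightarrow> rec_eval f [y] z \<Longrightarrow> rec_eval (Cn f [g]) xs z"
  by (rule rec_eval.comp[where ys="[y]"]) auto
lemma cn2: "rec_eval g1 xs y1 \<Longrightarrow> rec_eval g2 xs y2 \<Longrightarrow> rec_eval f [y1, y2] z \<Longrightarrow> rec_eval (Cn f [g1, g2]) xs z"
  by (rule rec_eval.comp[where ys="[y1, y2]"]) auto

fun constf :: "nat \<Rightarrow> recf" where
  "constf 0 = Zf" | "constf (Suc c) = Cn Sf [constf c]"

lemma constf_eval: "rec_eval (constf c) xs c"
proof (induction c)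
  case 0 then show ?case by (simp add: rec_eval.zero)
next
  case (Suc c) then show ?case by (auto intro: cn1 rec_eval.succ)
qed

lemma pf_eval: "i < length xs \<Longrightarrow> xs ! i = v \<Longrightarrow> rec_eval (Pf i) xs v"
  using rec_eval.proj by blast

definition "addf = Pr (Pf 0) (Cn Sf [Pf 1])"
lemma addf_eval: "rec_eval addf [x, y] (x + y)"
proof (induction x)
  case 0 then show ?case unfolding addf_def by (auto intro!: rec_eval.prim0 pf_eval)
next
  case (Suc x)
  show ?case unfolding addf_def
    by (rule rec_eval.primS[OF Suc[unfolded addf_def]]) (auto intro!: cn1 pf_eval rec_eval.succ[where xs="[]", simplified])
qed

definition "predf = Pr Zf (Pf 0)"
lemma predf_eval: "rec_eval predf [x] (x - 1)"
proof (induction x)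
  case 0 then show ?case unfolding predf_def by (auto intro!: rec_eval.prim0 rec_eval.zero)
next
  case (Suc x)
  show ?case unfolding predf_def
    by (rule rec_eval.primS[OF Suc[unfolded predf_def]]) (auto intro!: pf_eval)
qed

definition "subf = Pr (Pf 0) (Cn predf [Pf 1])"
lemma subf_eval: "rec_eval subf [y, x] (x - y)"
proof (induction y)
  case 0 then show ?case unfolding subf_def by (auto intro!: rec_eval.prim0 pf_eval)
next
  case (Suc y)
  have "rec_eval (Cn predf [Pf 1]) [y, x - y, x] (x - Suc y)"
    by (rule cn1[OF pf_eval predf_eval[of "x - y", simplified]]) auto
  then show ?case unfolding subf_def
    by (rule rec_eval.primS[OF Suc[unfolded subf_def]])
qed

definition "trif = Pr Zf (Cn addf [Pf 1, Cn Sf [Pf 0]])"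
lemma trif_eval: "rec_eval trif [n] (triangle n)"
proof (induction n)
  case 0 then show ?case unfolding trif_def by (auto intro!: rec_eval.prim0 rec_eval.zero)
next
  case (Suc n)
  have "rec_eval (Cn addf [Pf 1, Cn Sf [Pf 0]]) [n, triangle n] (triangle n + Suc n)"
    by (rule cn2[OF _ _ addf_eval]) (auto intro!: pf_eval cn1 rec_eval.succ[where xs="[]", simplified])
  then have "rec_eval trif [Suc n] (triangle n + Suc n)" unfolding trif_def
    by (rule rec_eval.primS[OF Suc[unfolded trif_def]])
  then show ?case by simp
qed

definition "pef = Cn addf [Cn trif [Cn addf [Pf 0, Pf 1]], Pf 0]"
lemma pef_eval: "rec_eval pef [a, b] (prod_encode (a, b))"
  unfolding pef_def prod_encode_def
  by (auto intro!: cn2[OF _ _ addf_eval] cn1[OF _ trif_eval] pf_eval)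

lemma pef_eval2: "rec_eval g1 xs a \<Longrightarrow> rec_eval g2 xs b \<Longrightarrow> rec_eval (Cn pef [g1, g2]) xs (prod_encode (a, b))"
  by (rule cn2[OF _ _ pef_eval])

lemma triangle_mono: "i \<le> j \<Longrightarrow> triangle i \<le> triangle j"
  by (induction j) (auto simp: le_Suc_eq)

definition "sf = Mn (Cn subf [Cn trif [Cn Sf [Pf 0]], Cn Sf [Pf 1]])"
lemma sf_eval: "rec_eval sf [prod_encode (a, b)] (a + b)"
proof -
  have ev: "rec_eval (Cn subf [Cn trif [Cn Sf [Pf 0]], Cn Sf [Pf 1]]) [s, z] (Suc z - triangle (Suc s))" for s z
    by (rule cn2[OF _ _ subf_eval]) (auto simp del: triangle_Suc intro!: cn1[OF _ trif_eval] cn1 pf_eval rec_eval.succ[where xs="[]", simplified])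
  let ?z = "prod_encode (a, b)"
  have "Suc ?z - triangle (Suc (a + b)) = 0" by (simp add: prod_encode_def)
  moreover have "\<exists>y. Suc ?z - triangle (Suc i) = Suc y" if "i < a + b" for i
  proof -
    have "triangle (Suc i) \<le> triangle (a + b)" using that triangle_mono[of "Suc i" "a + b"] by (simp del: triangle_Suc)
    then have "triangle (Suc i) \<le> ?z" by (simp add: prod_encode_def)
    then show ?thesis by (intro exI[of _ "?z - triangle (Suc i)"]) simp
  qed
  ultimately show ?thesis unfolding sf_def
    using ev by (intro rec_eval.mu) (metis, metis)
qed

definition "fstf = Cn subf [Cn trif [sf], Pf 0]"
lemma fstf_eval: "rec_eval fstf [prod_encode (a, b)] a"
proof -
  have "rec_eval fstf [prod_encode (a, b)] (prod_encode (a, b) - triangle (a + b))"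
    unfolding fstf_def by (rule cn2[OF _ _ subf_eval]) (auto intro!: cn1[OF sf_eval trif_eval] pf_eval)
  then show ?thesis by (simp add: prod_encode_def)
qed

definition "sndf = Cn subf [fstf, sf]"
lemma sndf_eval: "rec_eval sndf [prod_encode (a, b)] b"
proof -
  have "rec_eval sndf [prod_encode (a, b)] (a + b - a)"
    unfolding sndf_def by (rule cn2[OF fstf_eval sf_eval subf_eval])
  then show ?thesis by simp
qed

definition cpair :: "nat \<Rightarrow> nat \<Rightarrow> tm \<times> tm" where
  "cpair N i = (Mul (Var N) (Cst i), Mul (Cst i) (Var N))"

fun exq :: "nat \<Rightarrow> nat \<Rightarrow> (tm \<times> tm) list" where
  "exq k 0 = []" | "exq k (Suc N) = map (cpair N) [0..<k] @ exq k N"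

definition encp :: "tm \<times> tm \<Rightarrow> nat" where
  "encp = (\<lambda>(s, t). prod_encode (enc_tm s, enc_tm t))"

definition CEf :: "nat \<Rightarrow> recf" where
  "CEf i = (let V = Cn pef [constf 0, Pf 0]; C = constf (prod_encode (5, i)) in
     Cn pef [Cn pef [constf 4, Cn pef [V, C]], Cn pef [constf 4, Cn pef [C, V]]])"

lemma CEf_eval: "rec_eval (CEf i) (N # rest) (encp (cpair N i))"
  unfolding CEf_def Let_def encp_def cpair_def
  by (auto intro!: pef_eval2 constf_eval pf_eval rec_eval.zero)

fun Hl :: "nat list \<Rightarrow> recf" where
  "Hl [] = Pf 1" | "Hl (i # is) = Cn Sf [Cn pef [CEf i, Hl is]]"

lemma Hl_eval: "rec_eval (Hl is) (N # list_encode ws # xs) (list_encode (map (\<lambda>i. encp (cpair N i)) is @ ws))"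
proof (induction "is")
  case Nil then show ?case by (auto intro!: pf_eval)
next
  case (Cons i "is")
  show ?case by (auto intro!: cn1[OF _ rec_eval.succ[where xs="[]"]] pef_eval2 CEf_eval Cons)
qed

definition "Gf k = Pr (Pf 0) (Hl [0..<k])"

lemma Gf_eval: "rec_eval (Gf k) [N, list_encode ws] (list_encode (map encp (exq k N) @ ws))"
proof (induction N)
  case 0 then show ?case unfolding Gf_def by (auto intro!: rec_eval.prim0 pf_eval)
next
  case (Suc N)
  have "rec_eval (Gf k) [Suc N, list_encode ws]
     (list_encode (map (\<lambda>i. encp (cpair N i)) [0..<k] @ (map encp (exq k N) @ ws)))"
    unfolding Gf_def by (rule rec_eval.primS[OF Suc[unfolded Gf_def] Hl_eval])
  then show ?case by (simp add: comp_def)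
qed

definition "rf k = Cn pef [fstf, Cn pef [Cn fstf [sndf],
   Cn (Gf k) [Cn addf [fstf, Cn fstf [sndf]], Cn sndf [sndf]]]]"

lemma rf_eval: "rec_eval (rf k) [enc_dioph (m, n, eqs)] (enc_dioph (m, n, exq k (m + n) @ eqs))"
proof -
  have "rec_eval (rf k) [enc_dioph (m, n, eqs)]
     (prod_encode (m, prod_encode (n, list_encode (map encp (exq k (m + n)) @ map encp eqs))))"
    unfolding rf_def enc_dioph_def
    by (auto simp flip: encp_def intro!: pef_eval2 fstf_eval cn1[OF sndf_eval fstf_eval] cn1[OF sndf_eval sndf_eval]
      cn2[OF _ _ Gf_eval] cn2[OF _ _ addf_eval])
  then show ?thesis unfolding enc_dioph_def encp_def by simp
qed



lemma inverse_comm: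
  fixes y z :: "'d::division_ring"
  assumes "y \<noteq> 0" "z * y = y * z"
  shows "z * inverse y = inverse y * z"
proof -
  have "z * inverse y = (inverse y * y) * z * inverse y" using assms by simp
  also have "\<dots> = inverse y * (y * z) * inverse y" by (simp add: mult.assoc)
  also have "\<dots> = inverse y * (z * y) * inverse y" using assms by simp
  also have "\<dots> = inverse y * z * (y * inverse y)" by (simp add: mult.assoc)
  also have "\<dots> = inverse y * z" using assms by simp
  finally show ?thesis .
qed

lemma foldr_mult_acc:
  "foldr (\<lambda>i acc. (g i :: 'a::ring_1) * acc) xs a = foldr (\<lambda>i acc. g i * acc) xs 1 * a"
  by (induction xs) (auto simp: mult.assoc)

context
  fixes k :: nat and der :: "nat \<Rightarrow> 'k::field \<Rightarrow> 'k"
    and j :: "'k \<Rightarrow> 'd::division_ring" and d :: "nat \<Rightarrow> 'd"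
  assumes CD: "commuting_derivations k der"
    and FR: "is_diffop_fraction_ring k der j d"
begin

lemma FRs: "(\<forall>a b. j (a + b) = j a + j b) \<and> (\<forall>a b. j (a * b) = j a * j b) \<and> j 1 = 1 \<and>
     (\<forall>i<k. \<forall>l<k. d i * d l = d l * d i) \<and>
     (\<forall>i<k. \<forall>a. d i * j a = j a * d i + j (der i a)) \<and>
     (\<forall>A c. finite A \<longrightarrow> A \<subseteq> multi_indices k \<longrightarrow>
        (\<Sum>\<alpha>\<in>A. j (c \<alpha>) * ncmono k d \<alpha>) = 0 \<longrightarrow> (\<forall>\<alpha>\<in>A. c \<alpha> = 0)) \<and>
     (\<forall>x. \<exists>p\<in>diffop_set k j d. \<exists>q\<in>diffop_set k j d. p \<noteq> 0 \<and> x = inverse p * q)"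
  using FR unfolding is_diffop_fraction_ring_def .

lemma j_add: "j (a + b) = j a + j b" using FRs by (elim conjE) (rule spec2)
lemma j_mult: "j (a * b) = j a * j b" using FRs by (elim conjE) (rule spec2)
lemma j_one: "j 1 = 1" using FRs by (elim conjE)
lemma d_comm: "i < k \<Longrightarrow> l < k \<Longrightarrow> d i * d l = d l * d i"
  using FRs by (elim conjE) simp
lemma d_j: "i < k \<Longrightarrow> d i * j a = j a * d i + j (der i a)"
  using FRs by (elim conjE) simp
lemma indep: "finite A \<Longrightarrow> A \<subseteq> multi_indices k \<Longrightarrow>
        (\<Sum>\<alpha>\<in>A. j (c \<alpha>) * ncmono k d \<alpha>) = 0 \<Longrightarrow> \<alpha> \<in> A \<Longrightarrow> c \<alpha> = 0"
  using FRs by (elim conjE) (simp only: )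
lemma frac: "\<exists>p\<in>diffop_set k j d. \<exists>q\<in>diffop_set k j d. p \<noteq> 0 \<and> x = inverse p * q"
  using FRs by (elim conjE) (rule spec)
lemma j_zero: "j 0 = 0"
  using j_add[of 0 0] by simp

lemma der_mult: "i < k \<Longrightarrow> der i (a * b) = der i a * b + a * der i b"
  using CD unfolding commuting_derivations_def by (elim conjE) simp
lemma der_one: "i < k \<Longrightarrow> der i 1 = 0"
proof -
  assume i: "i < k"
  have "der i 1 = der i 1 + der i 1" using der_mult[OF i, of 1 1] by (simp only: mult_1_left mult_1_right)
  then show ?thesis by (metis add_cancel_right_right)
qed

lemma d_pow_comm: "i < k \<Longrightarrow> l < k \<Longrightarrow> d i * d l ^ n = d l ^ n * d i"
proof (induction n)
  case 0 then show ?case by simp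
next
  case (Suc n)
  have "d i * d l ^ Suc n = (d i * d l) * d l ^ n" by (simp add: mult.assoc)
  also have "\<dots> = (d l * d i) * d l ^ n" using d_comm Suc.prems by simp
  also have "\<dots> = d l * (d i * d l ^ n)" by (simp add: mult.assoc)
  also have "\<dots> = d l ^ Suc n * d i" using Suc by (simp add: mult.assoc)
  finally show ?case .
qed

lemma d_foldr: "i < k \<Longrightarrow> set xs \<subseteq> {..<k} \<Longrightarrow>
   d i * foldr (\<lambda>l acc. d l ^ \<alpha> l * acc) xs 1 = foldr (\<lambda>l acc. d l ^ \<alpha> l * acc) xs 1 * d i"
proof (induction xs)
  case Nil then show ?case by simp
next
  case (Cons l xs)
  then have l: "l < k" by auto
  have "d i * foldr (\<lambda>l acc. d l ^ \<alpha> l * acc) (l # xs) 1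
     = (d i * d l ^ \<alpha> l) * foldr (\<lambda>l acc. d l ^ \<alpha> l * acc) xs 1" by (simp add: mult.assoc)
  also have "\<dots> = d l ^ \<alpha> l * (d i * foldr (\<lambda>l acc. d l ^ \<alpha> l * acc) xs 1)"
    using d_pow_comm[OF Cons.prems(1) l] by (simp add: mult.assoc)
  also have "\<dots> = foldr (\<lambda>l acc. d l ^ \<alpha> l * acc) (l # xs) 1 * d i"
    using Cons by (simp add: mult.assoc)
  finally show ?case .
qed

lemma d_M: "i < k \<Longrightarrow> d i * ncmono k d \<alpha> = ncmono k d \<alpha> * d i"
  unfolding ncmono_def by (rule d_foldr) auto

lemma ad_term: "i < k \<Longrightarrow> d i * (j a * ncmono k d \<alpha>) - j a * ncmono k d \<alpha> * d i = j (der i a) * ncmono k d \<alpha>"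
proof -
  assume i: "i < k"
  have "d i * (j a * ncmono k d \<alpha>) = (j a * d i + j (der i a)) * ncmono k d \<alpha>"
    using d_j[OF i] by (simp add: mult.assoc[symmetric])
  also have "\<dots> = j a * (ncmono k d \<alpha> * d i) + j (der i a) * ncmono k d \<alpha>"
    using d_M[OF i] by (simp add: algebra_simps)
  finally show ?thesis by (simp add: mult.assoc)
qed

lemma ad_sum: "i < k \<Longrightarrow> d i * (\<Sum>\<alpha>\<in>A. j (c \<alpha>) * ncmono k d \<alpha>) - (\<Sum>\<alpha>\<in>A. j (c \<alpha>) * ncmono k d \<alpha>) * d i
   = (\<Sum>\<alpha>\<in>A. j (der i (c \<alpha>)) * ncmono k d \<alpha>)"
  by (simp add: sum_distrib_left sum_distrib_right sum_subtractf[symmetric] ad_term)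

lemma smul_sum: "j a * (\<Sum>\<alpha>\<in>A. j (c \<alpha>) * ncmono k d \<alpha>) = (\<Sum>\<alpha>\<in>A. j (a * c \<alpha>) * ncmono k d \<alpha>)"
  by (simp add: sum_distrib_left j_mult mult.assoc)

lemma diffop_smul: "q \<in> diffop_set k j d \<Longrightarrow> j a * q \<in> diffop_set k j d"
proof -
  assume "q \<in> diffop_set k j d"
  then obtain A c where "finite A" "A \<subseteq> multi_indices k" "q = (\<Sum>\<alpha>\<in>A. j (c \<alpha>) * ncmono k d \<alpha>)"
    unfolding diffop_set_def by blast
  then show ?thesis unfolding diffop_set_def by (auto simp only: smul_sum)
qed

lemma diffop_ad: "i < k \<Longrightarrow> q \<in> diffop_set k j d \<Longrightarrow> d i * q - q * d i \<in> diffop_set k j d"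
proof -
  assume i: "i < k" and "q \<in> diffop_set k j d"
  then obtain A c where "finite A" "A \<subseteq> multi_indices k" "q = (\<Sum>\<alpha>\<in>A. j (c \<alpha>) * ncmono k d \<alpha>)"
    unfolding diffop_set_def by blast
  then show ?thesis unfolding diffop_set_def by (auto simp only: ad_sum[OF i])
qed

lemma diffop_ad_zero: assumes "i < k" "q \<in> diffop_set k j d" "d i * q - q * d i = 0"
  shows "\<exists>A c. finite A \<and> A \<subseteq> multi_indices k \<and> (\<forall>\<alpha>\<in>A. der i (c \<alpha>) = 0) \<and> q = (\<Sum>\<alpha>\<in>A. j (c \<alpha>) * ncmono k d \<alpha>)"
proof -
  obtain A c where A: "finite A" "A \<subseteq> multi_indices k" and q: "q = (\<Sum>\<alpha>\<in>A. j (c \<alpha>) * ncmono k d \<alpha>)"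
    using assms(2) unfolding diffop_set_def by blast
  have "(\<Sum>\<alpha>\<in>A. j (der i (c \<alpha>)) * ncmono k d \<alpha>) = 0" using assms(3) ad_sum[OF assms(1)] q by simp
  then have "\<forall>\<alpha>\<in>A. der i (c \<alpha>) = 0" using indep[OF A, of "\<lambda>\<alpha>. der i (c \<alpha>)"] by blast
  then show ?thesis using A q by blast
qed

lemma centralizer:
  assumes x: "\<forall>i<k. d i * x = x * d i"
  shows "\<exists>A c B b. finite A \<and> A \<subseteq> multi_indices k \<and> (\<forall>\<alpha>\<in>A. c \<alpha> \<in> constants k der) \<and>
     finite B \<and> B \<subseteq> multi_indices k \<and> (\<forall>\<alpha>\<in>B. b \<alpha> \<in> constants k der) \<and>
     (\<Sum>\<alpha>\<in>A. j (c \<alpha>) * ncmono k d \<alpha>) \<noteq> 0 \<and>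
     x = inverse (\<Sum>\<alpha>\<in>A. j (c \<alpha>) * ncmono k d \<alpha>) * (\<Sum>\<alpha>\<in>B. j (b \<alpha>) * ncmono k d \<alpha>)"
proof -
  let ?M = "ncmono k d"
  define Comp where "Comp = {(A, c). finite A \<and> A \<subseteq> multi_indices k \<and> A \<noteq> {} \<and> (\<forall>\<alpha>\<in>A. c \<alpha> \<noteq> 0) \<and>
      (\<Sum>\<alpha>\<in>A. j (c \<alpha>) * ?M \<alpha>) * x \<in> diffop_set k j d}"
  obtain p q where p: "p \<in> diffop_set k j d" and q: "q \<in> diffop_set k j d" and p0: "p \<noteq> 0"
    and xpq: "x = inverse p * q" using frac by blast
  obtain A0 c0 where A0: "finite A0" "A0 \<subseteq> multi_indices k" and pA0: "p = (\<Sum>\<alpha>\<in>A0. j (c0 \<alpha>) * ?M \<alpha>)"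
    using p unfolding diffop_set_def by blast
  define A1 where "A1 = {\<alpha>\<in>A0. c0 \<alpha> \<noteq> 0}"
  have pA1: "p = (\<Sum>\<alpha>\<in>A1. j (c0 \<alpha>) * ?M \<alpha>)"
    unfolding pA0 A1_def by (rule sum.mono_neutral_right) (use A0 j_zero in auto)
  have "A1 \<noteq> {}" using p0 pA1 by auto
  moreover have "p * x = q" using p0 xpq by (simp add: mult.assoc[symmetric])
  ultimately have "(A1, c0) \<in> Comp" unfolding Comp_def A1_def using A0 pA1 q A1_def by auto
  then have ex: "\<exists>n A c. (A, c) \<in> Comp \<and> card A = n" by blast
  define nmin where "nmin = (LEAST n. \<exists>A c. (A, c) \<in> Comp \<and> card A = n)"
  obtain A c where Ac: "(A, c) \<in> Comp" and cardA: "card A = nmin"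
    using LeastI_ex[OF ex] unfolding nmin_def by blast
  have minimal: "card A \<le> card A'" if "(A', c') \<in> Comp" for A' c'
    unfolding cardA nmin_def using that by (intro Least_le) blast
  from Ac have A: "finite A" "A \<subseteq> multi_indices k" "A \<noteq> {}" "\<forall>\<alpha>\<in>A. c \<alpha> \<noteq> 0"
    and pxA: "(\<Sum>\<alpha>\<in>A. j (c \<alpha>) * ?M \<alpha>) * x \<in> diffop_set k j d" unfolding Comp_def by auto
  obtain \<alpha>0 where a0: "\<alpha>0 \<in> A" using A by blast
  define a where "a = inverse (c \<alpha>0)"
  define c1 where "c1 = (\<lambda>\<alpha>. a * c \<alpha>)"
  define p1 where "p1 = (\<Sum>\<alpha>\<in>A. j (c1 \<alpha>) * ?M \<alpha>)"
  have c1a0: "c1 \<alpha>0 = 1" using A a0 unfolding c1_def a_def by simp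
  have p1x: "p1 * x \<in> diffop_set k j d"
  proof -
    have "p1 = j a * (\<Sum>\<alpha>\<in>A. j (c \<alpha>) * ?M \<alpha>)" unfolding p1_def c1_def by (simp add: smul_sum)
    then have "p1 * x = j a * ((\<Sum>\<alpha>\<in>A. j (c \<alpha>) * ?M \<alpha>) * x)" by (simp add: mult.assoc)
    then show ?thesis using diffop_smul[OF pxA] by simp
  qed
  have adx: "d i * (y * x) - y * x * d i = (d i * y - y * d i) * x" if "i < k" for i y
  proof -
    have "y * x * d i = (y * d i) * x" using x that by (simp add: mult.assoc)
    then show ?thesis by (simp add: left_diff_distrib mult.assoc)
  qed
  have const: "der i (c1 \<alpha>) = 0" if i: "i < k" and al: "\<alpha> \<in> A" for i \<alpha>
  proof (rule ccontr)
    assume nz: "der i (c1 \<alpha>) \<noteq> 0"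
    define B where "B = {\<alpha>\<in>A. der i (c1 \<alpha>) \<noteq> 0}"
    have adp1: "d i * p1 - p1 * d i = (\<Sum>\<alpha>\<in>B. j (der i (c1 \<alpha>)) * ?M \<alpha>)"
      unfolding p1_def ad_sum[OF i] B_def by (rule sum.mono_neutral_right) (use A j_zero in auto)
    have "(d i * p1 - p1 * d i) * x \<in> diffop_set k j d"
      using diffop_ad[OF i p1x] adx[OF i] by simp
    then have "(B, \<lambda>\<alpha>. der i (c1 \<alpha>)) \<in> Comp"
      unfolding Comp_def B_def using A nz al adp1 B_def by auto
    then have AB: "card A \<le> card B" by (rule minimal)
    have "B \<subseteq> A" unfolding B_def by auto
    moreover have "\<alpha>0 \<notin> B" unfolding B_def using c1a0 der_one[OF i] by simp
    ultimately have "B \<subset> A" using a0 by blast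
    then have "card B < card A" using A(1) by (metis psubset_card_mono)
    with AB show False by simp
  qed
  have p1ne: "p1 \<noteq> 0"
  proof
    assume "p1 = 0"
    then have "c1 \<alpha>0 = 0" using indep[OF A(1,2) _ a0] unfolding p1_def by blast
    then show False using c1a0 by simp
  qed
  have adp1z: "d i * p1 - p1 * d i = 0" if i: "i < k" for i
    unfolding p1_def ad_sum[OF i] using const[OF i] j_zero by simp
  have "\<forall>i<k. \<exists>B b. finite B \<and> B \<subseteq> multi_indices k \<and> (\<forall>\<alpha>\<in>B. der i (b \<alpha>) = 0) \<and> p1 * x = (\<Sum>\<alpha>\<in>B. j (b \<alpha>) * ?M \<alpha>)"
  proof (intro allI impI)
    fix i assume i: "i < k"
    have "d i * (p1 * x) - p1 * x * d i = 0" using adx[OF i] adp1z[OF i] by simp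
    then show "\<exists>B b. finite B \<and> B \<subseteq> multi_indices k \<and> (\<forall>\<alpha>\<in>B. der i (b \<alpha>) = 0) \<and> p1 * x = (\<Sum>\<alpha>\<in>B. j (b \<alpha>) * ?M \<alpha>)"
      by (rule diffop_ad_zero[OF i p1x])
  qed
  obtain B b where B: "finite B" "B \<subseteq> multi_indices k" and qB: "p1 * x = (\<Sum>\<alpha>\<in>B. j (b \<alpha>) * ?M \<alpha>)"
    using p1x unfolding diffop_set_def by blast
  have bconst: "\<forall>\<alpha>\<in>B. b \<alpha> \<in> constants k der"
    unfolding constants_def
  proof (intro ballI CollectI allI impI)
    fix \<alpha> i assume al: "\<alpha> \<in> B" and i: "i < k"
    have "d i * (p1 * x) - p1 * x * d i = 0" using adx[OF i] adp1z[OF i] by simp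
    then have "(\<Sum>\<alpha>\<in>B. j (der i (b \<alpha>)) * ?M \<alpha>) = 0" using ad_sum[OF i] qB by simp
    then show "der i (b \<alpha>) = 0" using indep[OF B _ al, of "\<lambda>\<alpha>. der i (b \<alpha>)"] by blast
  qed
  have c1const: "\<forall>\<alpha>\<in>A. c1 \<alpha> \<in> constants k der" unfolding constants_def using const by blast
  have "x = inverse p1 * (p1 * x)" using p1ne by (simp add: mult.assoc[symmetric])
  then have xeq: "x = inverse p1 * (\<Sum>\<alpha>\<in>B. j (b \<alpha>) * ?M \<alpha>)" using qB by simp
  show ?thesis using A B bconst c1const p1ne xeq unfolding p1_def by blast
qed

end



context
  fixes k :: nat and der :: "nat \<Rightarrow> 'k::field \<Rightarrow> 'k"
    and j :: "'k \<Rightarrow> 'd::division_ring" and d :: "nat \<Rightarrow> 'd"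
    and e :: "'k \<Rightarrow> 'f::field" and t :: "nat \<Rightarrow> 'f"
    and \<phi> :: "'f \<Rightarrow> 'd"
  assumes CD: "commuting_derivations k der"
    and FR: "is_diffop_fraction_ring k der j d"
    and RF: "is_rational_function_field k (constants k der) e t"
    and HOM: "is_C_algebra_hom k (constants k der) e t j d \<phi>"
begin

lemma HOMs: "(\<forall>x y. \<phi> (x + y) = \<phi> x + \<phi> y) \<and> (\<forall>x y. \<phi> (x * y) = \<phi> x * \<phi> y) \<and> \<phi> 1 = 1 \<and>
     (\<forall>c\<in>constants k der. \<phi> (e c) = j c) \<and> (\<forall>i<k. \<phi> (t i) = d i)"
  using HOM unfolding is_C_algebra_hom_def .

lemma phi_add: "\<phi> (x + y) = \<phi> x + \<phi> y" using HOMs by (elim conjE) (rule spec2)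
lemma phi_mult: "\<phi> (x * y) = \<phi> x * \<phi> y" using HOMs by (elim conjE) (rule spec2)
lemma phi_one: "\<phi> 1 = 1" using HOMs by (elim conjE)
lemma phi_e: "c \<in> constants k der \<Longrightarrow> \<phi> (e c) = j c" using HOMs by (elim conjE) simp
lemma phi_t: "i < k \<Longrightarrow> \<phi> (t i) = d i" using HOMs by (elim conjE) simp
lemma phi_zero: "\<phi> 0 = 0" using phi_add[of 0 0] by simp

lemma phi_sum: "\<phi> (sum g A) = (\<Sum>x\<in>A. \<phi> (g x))"
  by (induction A rule: infinite_finite_induct) (auto simp: phi_zero phi_add)

lemma phi_pow: "\<phi> (x ^ n) = \<phi> x ^ n"
  by (induction n) (auto simp: phi_one phi_mult)


lemma phi_inj: "\<phi> x = \<phi> y \<Longrightarrow> x = y"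
proof (rule ccontr)
  assume eq: "\<phi> x = \<phi> y" and ne: "x \<noteq> y"
  have "\<phi> (x - y) + \<phi> y = \<phi> x" using phi_add[of "x - y" y] by simp
  then have z: "\<phi> (x - y) = 0" using eq by simp
  have "\<phi> ((x - y) * inverse (x - y)) = 1" using ne phi_one by simp
  then show False using z phi_mult by simp
qed

lemma phi_inverse: "\<phi> (inverse x) = inverse (\<phi> x)"
proof (cases "x = 0")
  case True then show ?thesis using phi_zero by simp
next
  case False
  then have "\<phi> x * \<phi> (inverse x) = 1" using phi_mult[of x "inverse x"] phi_one by simp
  then show ?thesis by (rule inverse_unique[symmetric])
qed


lemma phi_prod: "k' \<le> k \<Longrightarrow> \<phi> (\<Prod>i<k'. t i ^ \<alpha> i) = foldr (\<lambda>l acc. d l ^ \<alpha> l * acc) [0..<k'] 1"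
proof (induction k')
  case 0 then show ?case by (simp add: phi_one)
next
  case (Suc k')
  have "\<phi> (\<Prod>i<Suc k'. t i ^ \<alpha> i) = \<phi> (\<Prod>i<k'. t i ^ \<alpha> i) * d k' ^ \<alpha> k'"
    using Suc.prems by (simp add: phi_mult phi_pow phi_t)
  also have "\<dots> = foldr (\<lambda>l acc. d l ^ \<alpha> l * acc) [0..<Suc k'] 1"
    using Suc foldr_mult_acc[of "\<lambda>l. d l ^ \<alpha> l" "[0..<k']" "d k' ^ \<alpha> k'"] by simp
  finally show ?case .
qed


lemma phi_poly: "\<forall>\<alpha>\<in>A. c \<alpha> \<in> constants k der \<Longrightarrow>
   \<phi> (\<Sum>\<alpha>\<in>A. e (c \<alpha>) * (\<Prod>i<k. t i ^ \<alpha> i)) = (\<Sum>\<alpha>\<in>A. j (c \<alpha>) * ncmono k d \<alpha>)"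
  unfolding phi_sum ncmono_def by (intro sum.cong refl) (simp add: phi_mult phi_e phi_prod)

lemma comm_poly: assumes i: "i < k" and c: "\<forall>\<alpha>\<in>A. c \<alpha> \<in> constants k der"
  shows "d i * (\<Sum>\<alpha>\<in>A. j (c \<alpha>) * ncmono k d \<alpha>) = (\<Sum>\<alpha>\<in>A. j (c \<alpha>) * ncmono k d \<alpha>) * d i"
proof -
  have "(\<Sum>\<alpha>\<in>A. j (der i (c \<alpha>)) * ncmono k d \<alpha>) = 0"
    using c i j_zero[OF CD FR] unfolding constants_def by simp
  then show ?thesis using ad_sum[OF CD FR i, of c A] by simp
qed

lemma RFs: "\<forall>x. \<exists>p\<in>cpoly_set k (constants k der) e t. \<exists>q\<in>cpoly_set k (constants k der) e t. q \<noteq> 0 \<and> x = p / q"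
  using RF unfolding is_rational_function_field_def by (elim conjE)


lemma image_iff_comm: "y \<in> range \<phi> \<longleftrightarrow> (\<forall>i<k. d i * y = y * d i)"
proof
  assume "y \<in> range \<phi>"
  then obtain f where y: "y = \<phi> f" by blast
  obtain p q where p: "p \<in> cpoly_set k (constants k der) e t" and q: "q \<in> cpoly_set k (constants k der) e t"
    and q0: "q \<noteq> 0" and f: "f = p / q" using spec[OF RFs, of f] by (elim bexE conjE) (rule that)
  have cp: "d i * \<phi> r = \<phi> r * d i" if rr: "r \<in> cpoly_set k (constants k der) e t" and ii: "i < k" for r i
  proof -
    obtain A c where "\<forall>\<alpha>\<in>A. c \<alpha> \<in> constants k der" "r = (\<Sum>\<alpha>\<in>A. e (c \<alpha>) * (\<Prod>i<k. t i ^ \<alpha> i))"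
      using rr unfolding cpoly_set_def mem_Collect_eq by (elim exE conjE) (rule that)
    then show ?thesis using phi_poly comm_poly[OF ii] by simp
  qed
  have qn: "\<phi> q \<noteq> 0"
  proof
    assume "\<phi> q = 0"
    then have "\<phi> q = \<phi> 0" using phi_zero by simp
    then show False using q0 phi_inj by blast
  qed
  have yy: "y = \<phi> p * inverse (\<phi> q)" unfolding y f divide_inverse phi_mult phi_inverse ..
  show "\<forall>i<k. d i * y = y * d i"
  proof (intro allI impI)
    fix i assume i: "i < k"
    have ci: "d i * inverse (\<phi> q) = inverse (\<phi> q) * d i"
      using inverse_comm[OF qn cp[OF q i]] .
    have "d i * y = (d i * \<phi> p) * inverse (\<phi> q)" unfolding yy by (simp only: mult.assoc)
    also have "\<dots> = \<phi> p * (d i * inverse (\<phi> q))" unfolding cp[OF p i] by (simp only: mult.assoc)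
    also have "\<dots> = y * d i" unfolding ci yy by (simp only: mult.assoc)
    finally show "d i * y = y * d i" .
  qed
next
  assume x: "\<forall>i<k. d i * y = y * d i"
  obtain A c B b where A: "finite A" "A \<subseteq> multi_indices k" "\<forall>\<alpha>\<in>A. c \<alpha> \<in> constants k der"
    and B: "finite B" "B \<subseteq> multi_indices k" "\<forall>\<alpha>\<in>B. b \<alpha> \<in> constants k der"
    and P0: "(\<Sum>\<alpha>\<in>A. j (c \<alpha>) * ncmono k d \<alpha>) \<noteq> 0"
    and yeq: "y = inverse (\<Sum>\<alpha>\<in>A. j (c \<alpha>) * ncmono k d \<alpha>) * (\<Sum>\<alpha>\<in>B. j (b \<alpha>) * ncmono k d \<alpha>)"
    using centralizer[OF CD FR x] by (elim exE conjE) (rule that)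
  define P' where "P' = (\<Sum>\<alpha>\<in>A. e (c \<alpha>) * (\<Prod>i<k. t i ^ \<alpha> i))"
  define Q' where "Q' = (\<Sum>\<alpha>\<in>B. e (b \<alpha>) * (\<Prod>i<k. t i ^ \<alpha> i))"
  have PP: "\<phi> P' = (\<Sum>\<alpha>\<in>A. j (c \<alpha>) * ncmono k d \<alpha>)" unfolding P'_def by (rule phi_poly[OF A(3)])
  have QQ: "\<phi> Q' = (\<Sum>\<alpha>\<in>B. j (b \<alpha>) * ncmono k d \<alpha>)" unfolding Q'_def by (rule phi_poly[OF B(3)])
  have comm: "\<phi> Q' * \<phi> P' = \<phi> P' * \<phi> Q'" unfolding phi_mult[symmetric] by (simp only: mult.commute)
  have "\<phi> P' \<noteq> 0" using PP P0 by simp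
  then have "\<phi> Q' * inverse (\<phi> P') = inverse (\<phi> P') * \<phi> Q'" by (rule inverse_comm[OF _ comm])
  then have "y = \<phi> (Q' / P')" using yeq PP QQ by (simp add: divide_inverse phi_mult phi_inverse)
  then show "y \<in> range \<phi>" by blast
qed

end



lemma set_exq: "p \<in> set (exq k N) \<longleftrightarrow> (\<exists>v i. v < N \<and> i < k \<and> p = cpair v i)"
proof (induction N)
  case (Suc N)
  show ?case unfolding exq.simps set_append Un_iff Suc set_map
    by (auto simp: less_Suc_eq; blast)
qed simp

context
  fixes k :: nat and der :: "nat \<Rightarrow> 'k::field \<Rightarrow> 'k"
    and j :: "'k \<Rightarrow> 'd::division_ring" and d :: "nat \<Rightarrow> 'd"
    and e :: "'k \<Rightarrow> 'f::field" and t :: "nat \<Rightarrow> 'f"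
    and \<phi> :: "'f \<Rightarrow> 'd"
  assumes CD: "commuting_derivations k der"
    and FR: "is_diffop_fraction_ring k der j d"
    and RF: "is_rational_function_field k (constants k der) e t"
    and HOM: "is_C_algebra_hom k (constants k der) e t j d \<phi>"
begin

lemma eval_phi: "wf_tm k nv s \<Longrightarrow> nv \<le> length zs \<Longrightarrow> eval_tm d (map \<phi> zs) s = \<phi> (eval_tm t zs s)"
  by (induction s) (auto simp: phi_add[OF CD FR RF HOM] phi_mult[OF CD FR RF HOM]
      phi_zero[OF CD FR RF HOM] phi_one[OF CD FR RF HOM] phi_t[OF CD FR RF HOM])

lemma dset: assumes wf: "wf_dioph k (m, n, eqs)"
  shows "dioph_set d (m, n, exq k (m + n) @ eqs) = map \<phi> ` dioph_set t (m, n, eqs)"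
proof
  have wfe: "wf_tm k (m + n) s \<and> wf_tm k (m + n) u" if "(s, u) \<in> set eqs" for s u
    using wf that unfolding wf_dioph_def by auto
  show "dioph_set d (m, n, exq k (m + n) @ eqs) \<subseteq> map \<phi> ` dioph_set t (m, n, eqs)"
  proof
    fix xs assume "xs \<in> dioph_set d (m, n, exq k (m + n) @ eqs)"
    then obtain ys where lx: "length xs = m" and ly: "length ys = n"
      and sat: "\<forall>(s, u)\<in>set (exq k (m + n) @ eqs). eval_tm d (xs @ ys) s = eval_tm d (xs @ ys) u"
      unfolding dioph_set_def by auto
    define zs' where "zs' = xs @ ys"
    have lz: "length zs' = m + n" unfolding zs'_def using lx ly by simp
    have inr: "z \<in> range \<phi>" if "z \<in> set zs'" for z
    proof -
      obtain v where v: "v < m + n" "z = zs' ! v" using \<open>z \<in> set zs'\<close> lz by (metis in_set_conv_nth)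
      have "\<forall>i<k. d i * z = z * d i"
      proof (intro allI impI)
        fix i assume i: "i < k"
        have "cpair v i \<in> set (exq k (m + n))" using set_exq v i by blast
        then have "eval_tm d zs' (Mul (Var v) (Cst i)) = eval_tm d zs' (Mul (Cst i) (Var v))"
          using sat unfolding zs'_def cpair_def by fastforce
        then show "d i * z = z * d i" using v by simp
      qed
      then show ?thesis using image_iff_comm[OF CD FR RF HOM] by blast
    qed
    define zs where "zs = map (inv_into UNIV \<phi>) zs'"
    have mz: "map \<phi> zs = zs'" unfolding zs_def using inr by (simp add: map_idI f_inv_into_f)
    have lzs: "length zs = m + n" using lz zs_def by simp
    have eqz: "eval_tm t zs s = eval_tm t zs u" if "(s, u) \<in> set eqs" for s u
    proof -
      have "\<phi> (eval_tm t zs s) = eval_tm d zs' s" using eval_phi[of "m + n" s zs] wfe[OF that] lzs mz by simp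
      also have "\<dots> = eval_tm d zs' u" using sat that unfolding zs'_def by auto
      also have "\<dots> = \<phi> (eval_tm t zs u)" using eval_phi[of "m + n" u zs] wfe[OF that] lzs mz by simp
      finally show ?thesis by (rule phi_inj[OF CD FR RF HOM])
    qed
    have "take m zs \<in> dioph_set t (m, n, eqs)"
      unfolding dioph_set_def using lzs eqz
      by (auto intro!: exI[of _ "drop m zs"])
    moreover have "xs = map \<phi> (take m zs)" using mz lx unfolding zs'_def by (metis append_eq_conv_conj take_map)
    ultimately show "xs \<in> map \<phi> ` dioph_set t (m, n, eqs)" by blast
  qed
  show "map \<phi> ` dioph_set t (m, n, eqs) \<subseteq> dioph_set d (m, n, exq k (m + n) @ eqs)"
  proof
    fix xs assume "xs \<in> map \<phi> ` dioph_set t (m, n, eqs)"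
    then obtain xs0 ys0 where xs: "xs = map \<phi> xs0" and lx: "length xs0 = m" and ly: "length ys0 = n"
      and sat: "\<forall>(s, u)\<in>set eqs. eval_tm t (xs0 @ ys0) s = eval_tm t (xs0 @ ys0) u"
      unfolding dioph_set_def by auto
    define zs where "zs = xs0 @ ys0"
    have lz: "length zs = m + n" using lx ly zs_def by simp
    have ok: "eval_tm d (map \<phi> zs) s = eval_tm d (map \<phi> zs) u" if "(s, u) \<in> set (exq k (m + n) @ eqs)" for s u
    proof (cases "(s, u) \<in> set eqs")
      case True
      then show ?thesis using eval_phi[of "m + n" s zs] eval_phi[of "m + n" u zs] wfe[OF True] lz sat zs_def by auto
    next
      case False
      have "(s, u) \<in> set (exq k (m + n))" using that False by auto
      then obtain v i where v: "v < m + n" "i < k" and su: "(s, u) = cpair v i"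
        using set_exq[of "(s, u)" k "m + n"] by blast
      have "\<phi> (zs ! v) \<in> range \<phi>" by blast
      then have "d i * \<phi> (zs ! v) = \<phi> (zs ! v) * d i" using image_iff_comm[OF CD FR RF HOM] v by blast
      then show ?thesis using su v lz unfolding cpair_def by auto
    qed
    show "xs \<in> dioph_set d (m, n, exq k (m + n) @ eqs)"
      unfolding dioph_set_def using ok lx ly xs zs_def
      by (auto intro!: exI[of _ "map \<phi> ys0"])
  qed
qed

end


lemma wf_ext: "wf_dioph k (m, n, eqs) \<Longrightarrow> wf_dioph k (m, n, exq k (m + n) @ eqs)"
  unfolding wf_dioph_def by (auto simp: set_exq cpair_def)

theorem mainTheorem9:
  fixes k :: nat
    and der :: "nat \<Rightarrow> 'k::field \<Rightarrow> 'k"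
    and j :: "'k \<Rightarrow> 'd::division_ring" and d :: "nat \<Rightarrow> 'd"
    and e :: "'k \<Rightarrow> 'f::field" and t :: "nat \<Rightarrow> 'f"
    and \<phi> :: "'f \<Rightarrow> 'd"
  assumes "1 \<le> k"
    and "commuting_derivations k der"
    and "is_diffop_fraction_ring k der j d"
    and "is_rational_function_field k (constants k der) e t"
    and "is_C_algebra_hom k (constants k der) e t j d \<phi>"
  shows "diophantine_map k t d \<phi> \<and> effective_diophantine_map k t d \<phi>"
proof -
  note ds = dset[OF assms(2-5)]
  have key: "wf_dioph k (m, n, exq k (m + n) @ eqs) \<and> dioph_arity (m, n, exq k (m + n) @ eqs) = dioph_arity (m, n, eqs)
     \<and> dioph_set d (m, n, exq k (m + n) @ eqs) = map \<phi> ` dioph_set t (m, n, eqs)"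
    if "wf_dioph k (m, n, eqs)" for m n eqs
    using wf_ext[OF that] ds[OF that] by (simp add: dioph_arity_def)
  have "diophantine_map k t d \<phi>"
    unfolding diophantine_map_def is_diophantine_def
  proof (intro allI impI)
    fix m S assume "\<exists>\<delta>. wf_dioph k \<delta> \<and> dioph_arity \<delta> = m \<and> dioph_set t \<delta> = S"
    then obtain m0 n eqs where "wf_dioph k (m0, n, eqs)" "dioph_arity (m0, n, eqs) = m" "dioph_set t (m0, n, eqs) = S"
      by (metis prod_cases3)
    then show "\<exists>\<delta>. wf_dioph k \<delta> \<and> dioph_arity \<delta> = m \<and> dioph_set d \<delta> = map \<phi> ` S"
      using key by metis
  qed
  moreover have "effective_diophantine_map k t d \<phi>"
    unfolding effective_diophantine_map_def
  proof (intro exI[of _ "rf k"] allI impI)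
    fix \<delta> :: dioph assume wf: "wf_dioph k \<delta>"
    obtain m n eqs where de: "\<delta> = (m, n, eqs)" by (metis prod_cases3)
    show "\<exists>\<delta>'. rec_eval (rf k) [enc_dioph \<delta>] (enc_dioph \<delta>') \<and> wf_dioph k \<delta>' \<and>
               dioph_arity \<delta>' = dioph_arity \<delta> \<and> dioph_set d \<delta>' = map \<phi> ` dioph_set t \<delta>"
      using key[of m n eqs] wf rf_eval[of k m n eqs] unfolding de by blast
  qed
  ultimately show ?thesis ..
qed

end
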